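(* Let $(\Sigma,E)$ be an algebraic theory with free monad $(T,\eta,\mu)$. For every $T$-semialgebra $\alpha:TX\to X$, the $\Sigma^{\mathrm{s}}$-algebra $G(X,\alpha)=(X,I)$ with $I(\mathsf{a})=\alpha\circ\eta_X$ and $I(\mathsf{op})=\alpha\circ\mathsf{op}^{TX}\circ(\eta_X)^n$ for $(\mathsf{op}:n)\in\Sigma$ is a $(\Sigma^{\mathrm{s}},E^{\mathrm{s}})$-algebra, i.e. it satisfies all equations of $E^{\mathrm{s}}$.
   Context: $T=T_{\Sigma,E}$: $TX$ is the set of $\Sigma$-terms over $X$ modulo the smallest congruence containing substitution instances of $E$, with $\mathsf{op}^{TX}(\overline{t_1},\dots,\overline{t_n})=\overline{\mathsf{op}(t_1,\dots,t_n)}$, $\eta_X(x)=\overline{x}$ and $\mu_X$ flattening terms. A $T$-semialgebra is $\alpha:TX\to X$ with $\alpha\circ\mu_X=\alpha\circ T\alpha$. The theory $(\Sigma^{\mathrm{s}},E^{\mathrm{s}})$: $\Sigma^{\mathrm{s}}=\Sigma\uplus\{\mathsf{a}:1\}$ and $E^{\mathrm{s}}$ consists of $\mathsf{a}\mathsf{a}v_1=\mathsf{a}v_1$; $\mathsf{a}(\mathsf{op}(v_1,\dots,v_n))=\mathsf{op}(v_1,\dots,v_n)$ and $\mathsf{op}(\mathsf{a}v_1,\dots,\mathsf{a}v_n)=\mathsf{op}(v_1,\dots,v_n)$ for every $(\mathsf{op}:n)\in\Sigma$; and $t(\mathsf{a}v_1,\dots,\mathsf{a}v_n)=s(\mathsf{a}v_1,\dots,\mathsf{a}v_n)$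 for every equation $t(v_1,\dots,v_n)=s(v_1,\dots,v_n)$ in $E$. *)

theory Defs
  imports Main
begin

text \<open>A signature is a type of operation symbols 'f together with an arity map
  ar :: 'f => nat.  Terms over variables of type 'v:\<close>

datatype ('f, 'v) trm = Var 'v | Op 'f "('f, 'v) trm list"

fun wf :: "('f \<Rightarrow> nat) \<Rightarrow> ('f, 'v) trm \<Rightarrow> bool" where
  "wf ar (Var v) = True"
| "wf ar (Op f ts) = (length ts = ar f \<and> (\<forall>t\<in>set ts. wf ar t))"

fun vars :: "('f, 'v) trm \<Rightarrow> 'v set" where
  "vars (Var v) = {v}"
| "vars (Op f ts) = (\<Union>t\<in>set ts. vars t)"

fun subst :: "('v \<Rightarrow> ('f, 'w) trm) \<Rightarrow> ('f, 'v) trm \<Rightarrow> ('f, 'w) trm" where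
  "subst \<sigma> (Var v) = \<sigma> v"
| "subst \<sigma> (Op f ts) = Op f (map (subst \<sigma>) ts)"

fun vmap :: "('v \<Rightarrow> 'w) \<Rightarrow> ('f, 'v) trm \<Rightarrow> ('f, 'w) trm" where
  "vmap g (Var v) = Var (g v)"
| "vmap g (Op f ts) = Op f (map (vmap g) ts)"

fun eval :: "('f \<Rightarrow> 'x list \<Rightarrow> 'x) \<Rightarrow> ('v \<Rightarrow> 'x) \<Rightarrow> ('f, 'v) trm \<Rightarrow> 'x" where
  "eval I \<rho> (Var v) = \<rho> v"
| "eval I \<rho> (Op f ts) = I f (map (eval I \<rho>) ts)"

definition terms :: "('f \<Rightarrow> nat) \<Rightarrow> 'x set \<Rightarrow> ('f, 'x) trm set" where
  "terms ar X = {t. wf ar t \<and> vars t \<subseteq> X}"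

text \<open>Equations of E are pairs of terms over the variables v_1, v_2, ... (type nat).
  eqv ar E X is the smallest congruence on terms over X containing all
  substitution instances of equations in E.\<close>

inductive eqv :: "('f \<Rightarrow> nat) \<Rightarrow> (('f, nat) trm \<times> ('f, nat) trm) set \<Rightarrow> 'x set
    \<Rightarrow> ('f, 'x) trm \<Rightarrow> ('f, 'x) trm \<Rightarrow> bool"
  for ar E X where
  inst: "(l, r) \<in> E \<Longrightarrow> subst \<sigma> l \<in> terms ar X \<Longrightarrow> subst \<sigma> r \<in> terms ar X
          \<Longrightarrow> eqv ar E X (subst \<sigma> l) (subst \<sigma> r)"
| refl: "t \<in> terms ar X \<Longrightarrow> eqv ar E X t t"
| sym: "eqv ar E X s t \<Longrightarrow> eqv ar E X t s"
| trans: "eqv ar E X s t \<Longrightarrow> eqv ar E X t u \<Longrightarrow> eqv ar E X s u"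
| cong: "length ts = ar f \<Longrightarrow> length us = ar f
          \<Longrightarrow> (\<forall>i<length ts. eqv ar E X (ts ! i) (us ! i))
          \<Longrightarrow> eqv ar E X (Op f ts) (Op f us)"

definition eqrel :: "('f \<Rightarrow> nat) \<Rightarrow> (('f, nat) trm \<times> ('f, nat) trm) set \<Rightarrow> 'x set
    \<Rightarrow> (('f, 'x) trm \<times> ('f, 'x) trm) set" where
  "eqrel ar E X = {(s, t). eqv ar E X s t}"

definition Tset :: "('f \<Rightarrow> nat) \<Rightarrow> (('f, nat) trm \<times> ('f, nat) trm) set \<Rightarrow> 'x set
    \<Rightarrow> ('f, 'x) trm set set" where
  "Tset ar E X = terms ar X // eqrel ar E X"

definition cls :: "('f \<Rightarrow> nat) \<Rightarrow> (('f, nat) trm \<times> ('f, nat) trm) set \<Rightarrow> 'x set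
    \<Rightarrow> ('f, 'x) trm \<Rightarrow> ('f, 'x) trm set" where
  "cls ar E X t = eqrel ar E X `` {t}"

definition rep :: "'a set \<Rightarrow> 'a" where
  "rep C = (SOME t. t \<in> C)"

text \<open>Unit eta_X, operations op^{TX}, multiplication mu_X and the functor action T g.
  All are defined via (arbitrary) representatives; they are well defined.\<close>
definition eta :: "('f \<Rightarrow> nat) \<Rightarrow> (('f, nat) trm \<times> ('f, nat) trm) set \<Rightarrow> 'x set
    \<Rightarrow> 'x \<Rightarrow> ('f, 'x) trm set" where
  "eta ar E X x = cls ar E X (Var x)"

definition opT :: "('f \<Rightarrow> nat) \<Rightarrow> (('f, nat) trm \<times> ('f, nat) trm) set \<Rightarrow> 'x set
    \<Rightarrow> 'f \<Rightarrow> ('f, 'x) trm set list \<Rightarrow> ('f, 'x) trm set" where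
  "opT ar E X f cs = cls ar E X (Op f (map rep cs))"

definition mu :: "('f \<Rightarrow> nat) \<Rightarrow> (('f, nat) trm \<times> ('f, nat) trm) set \<Rightarrow> 'x set
    \<Rightarrow> ('f, ('f, 'x) trm set) trm set \<Rightarrow> ('f, 'x) trm set" where
  "mu ar E X C = cls ar E X (subst rep (rep C))"

definition Tmap :: "('f \<Rightarrow> nat) \<Rightarrow> (('f, nat) trm \<times> ('f, nat) trm) set \<Rightarrow> 'y set
    \<Rightarrow> ('x \<Rightarrow> 'y) \<Rightarrow> ('f, 'x) trm set \<Rightarrow> ('f, 'y) trm set" where
  "Tmap ar E Y g C = cls ar E Y (vmap g (rep C))"

definition semialgebra :: "('f \<Rightarrow> nat) \<Rightarrow> (('f, nat) trm \<times> ('f, nat) trm) set \<Rightarrow> 'x set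
    \<Rightarrow> (('f, 'x) trm set \<Rightarrow> 'x) \<Rightarrow> bool" where
  "semialgebra ar E X \<alpha> \<longleftrightarrow>
     (\<forall>C\<in>Tset ar E X. \<alpha> C \<in> X) \<and>
     (\<forall>C\<in>Tset ar E (Tset ar E X).
        \<alpha> (mu ar E X C) = \<alpha> (Tmap ar E X \<alpha> C))"

text \<open>Sigma^s = Sigma + {a : 1}: None is the new unary symbol a, Some f is f.\<close>
definition ars :: "('f \<Rightarrow> nat) \<Rightarrow> 'f option \<Rightarrow> nat" where
  "ars ar s = (case s of None \<Rightarrow> 1 | Some f \<Rightarrow> ar f)"

definition A :: "('f option, 'v) trm \<Rightarrow> ('f option, 'v) trm" where
  "A t = Op None [t]"

fun emb :: "('f, 'v) trm \<Rightarrow> ('f option, 'v) trm" where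
  "emb (Var v) = Var v"
| "emb (Op f ts) = Op (Some f) (map emb ts)"

definition Es :: "('f \<Rightarrow> nat) \<Rightarrow> (('f, nat) trm \<times> ('f, nat) trm) set
    \<Rightarrow> (('f option, nat) trm \<times> ('f option, nat) trm) set" where
  "Es ar E =
     {(A (A (Var 0)), A (Var 0))}
   \<union> {(A (Op (Some f) (map Var [0..<ar f])), Op (Some f) (map Var [0..<ar f])) | f. True}
   \<union> {(Op (Some f) (map (\<lambda>i. A (Var i)) [0..<ar f]), Op (Some f) (map Var [0..<ar f])) | f. True}
   \<union> {(subst (\<lambda>v. A (Var v)) (emb l), subst (\<lambda>v. A (Var v)) (emb r)) | l r. (l, r) \<in> E}"

definition Gint :: "('f \<Rightarrow> nat) \<Rightarrow> (('f, nat) trm \<times> ('f, nat) trm) set \<Rightarrow> 'x set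
    \<Rightarrow> (('f, 'x) trm set \<Rightarrow> 'x) \<Rightarrow> 'f option \<Rightarrow> 'x list \<Rightarrow> 'x" where
  "Gint ar E X \<alpha> s xs = (case s of
      None \<Rightarrow> \<alpha> (eta ar E X (hd xs))
    | Some f \<Rightarrow> \<alpha> (opT ar E X f (map (eta ar E X) xs)))"

definition is_model :: "('g \<Rightarrow> nat) \<Rightarrow> (('g, nat) trm \<times> ('g, nat) trm) set \<Rightarrow> 'x set
    \<Rightarrow> ('g \<Rightarrow> 'x list \<Rightarrow> 'x) \<Rightarrow> bool" where
  "is_model ar Eq X I \<longleftrightarrow>
     (\<forall>f xs. length xs = ar f \<longrightarrow> set xs \<subseteq> X \<longrightarrow> I f xs \<in> X) \<and>
     (\<forall>(l, r)\<in>Eq. \<forall>\<rho>. (\<forall>v. \<rho> v \<in> X) \<longrightarrow> eval I \<rho> l = eval I \<rho> r)"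

end

theory Submission
  imports Defs
begin

lemma subst_subst: "subst \<sigma> (subst \<tau> t) = subst (\<lambda>v. subst \<sigma> (\<tau> v)) t"
  by (induction t) auto

lemma vmap_subst: "vmap g t = subst (\<lambda>v. Var (g v)) t"
  by (induction t) auto

lemma eval_subst: "eval I \<rho> (subst \<sigma> t) = eval I (\<lambda>v. eval I \<rho> (\<sigma> v)) t"
  by (induction t) (simp_all add: comp_def cong: map_cong)

lemma subst_terms:
  assumes "s \<in> terms ar X" "\<And>v. v \<in> X \<Longrightarrow> \<sigma> v \<in> terms ar Y"
  shows "subst \<sigma> s \<in> terms ar Y"
  using assms
proof (induction s)
  case (Var v) then show ?case by (auto simp: terms_def)
next
  case (Op f ts)
  then show ?case by (fastforce simp: terms_def)
qed

lemma eqv_terms: "eqv ar E X s t \<Longrightarrow> s \<in> terms ar X \<and> t \<in> terms ar X"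
proof (induction rule: eqv.induct)
  case (cong ts f us)
  then show ?case
    by (auto simp: terms_def in_set_conv_nth) blast+
qed auto

lemma eqv_subst:
  assumes "eqv ar E X s t" "\<And>v. v \<in> X \<Longrightarrow> \<sigma> v \<in> terms ar Y"
  shows "eqv ar E Y (subst \<sigma> s) (subst \<sigma> t)"
  using assms
proof (induction rule: eqv.induct)
  case (inst l r \<tau>)
  have "eqv ar E Y (subst (\<lambda>v. subst \<sigma> (\<tau> v)) l) (subst (\<lambda>v. subst \<sigma> (\<tau> v)) r)"
    apply (rule eqv.inst[OF inst(1)])
    using subst_terms[OF inst(2) inst(4)] subst_terms[OF inst(3) inst(4)]
    by (auto simp: subst_subst)
  then show ?case by (simp add: subst_subst)
next
  case (refl t)
  then show ?case using subst_terms eqv.refl by blast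
next
  case (sym s t) then show ?case using eqv.sym by blast
next
  case (trans s t u) then show ?case using eqv.trans by blast
next
  case (cong ts f us)
  show ?case by simp (rule eqv.cong, insert cong, auto)
qed

lemma cls_mem: "t \<in> terms ar X \<Longrightarrow> t \<in> cls ar E X t"
  by (auto simp: cls_def eqrel_def intro: eqv.refl)

lemma rep_cls: "t \<in> terms ar X \<Longrightarrow> eqv ar E X t (rep (cls ar E X t))"
proof -
  assume "t \<in> terms ar X"
  then have "rep (cls ar E X t) \<in> cls ar E X t"
    unfolding rep_def by (rule someI[of "\<lambda>s. s \<in> cls ar E X t" t, OF cls_mem])
  then show ?thesis by (auto simp: cls_def eqrel_def)
qed

lemma cls_eq: "eqv ar E X s t \<Longrightarrow> cls ar E X s = cls ar E X t"
  unfolding cls_def eqrel_def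
  by (auto intro: eqv.trans eqv.sym)

lemma cls_Tset: "t \<in> terms ar X \<Longrightarrow> cls ar E X t \<in> Tset ar E X"
  unfolding Tset_def cls_def by (rule quotientI)

lemma Tset_E: "C \<in> Tset ar E X \<Longrightarrow> \<exists>t\<in>terms ar X. C = cls ar E X t"
  unfolding Tset_def cls_def by (auto elim: quotientE)

lemma rep_Tset: "C \<in> Tset ar E X \<Longrightarrow> rep C \<in> terms ar X"
  using Tset_E rep_cls eqv_terms by metis

lemma cls_rep: "C \<in> Tset ar E X \<Longrightarrow> cls ar E X (rep C) = C"
  using Tset_E rep_cls cls_eq eqv.sym by metis

lemma key:
  assumes sa: "semialgebra ar E X \<alpha>" and u: "u \<in> terms ar (Tset ar E X)"
  shows "\<alpha> (cls ar E X (subst rep u)) = \<alpha> (cls ar E X (vmap \<alpha> u))"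
proof -
  let ?C = "cls ar E (Tset ar E X) u"
  have C: "?C \<in> Tset ar E (Tset ar E X)" using cls_Tset[OF u] .
  have e: "eqv ar E (Tset ar E X) (rep ?C) u" using rep_cls[OF u] eqv.sym by blast
  have "mu ar E X ?C = cls ar E X (subst rep u)"
    unfolding mu_def by (rule cls_eq, rule eqv_subst[OF e], rule rep_Tset)
  moreover have "Tmap ar E X \<alpha> ?C = cls ar E X (vmap \<alpha> u)"
    unfolding Tmap_def vmap_subst
    by (rule cls_eq, rule eqv_subst[OF e]) (use sa in \<open>auto simp: semialgebra_def terms_def\<close>)
  moreover have "\<alpha> (mu ar E X ?C) = \<alpha> (Tmap ar E X \<alpha> ?C)"
    using sa C unfolding semialgebra_def by blast
  ultimately show ?thesis by simp
qed

lemma L1: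
  assumes sa: "semialgebra ar E X \<alpha>" and c: "c \<in> Tset ar E X"
  shows "\<alpha> (eta ar E X (\<alpha> c)) = \<alpha> c"
proof -
  have u: "Var c \<in> terms ar (Tset ar E X)" using c by (auto simp: terms_def)
  show ?thesis using key[OF sa u] cls_rep[OF c] by (simp add: eta_def)
qed

lemma var_terms: "x \<in> X \<Longrightarrow> Var x \<in> terms ar X"
  by (auto simp: terms_def)

lemma eta_Tset: "x \<in> X \<Longrightarrow> eta ar E X x \<in> Tset ar E X"
  unfolding eta_def by (rule cls_Tset[OF var_terms])

lemma L_op:
  assumes "set xs \<subseteq> X" "length xs = ar f"
  shows "Gint ar E X \<alpha> (Some f) xs = \<alpha> (cls ar E X (Op f (map Var xs)))"
proof -
  have "eqv ar E X (Op f (map rep (map (eta ar E X) xs))) (Op f (map Var xs))"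
    apply (rule eqv.cong)
    using assms by (auto simp: eta_def intro!: eqv.sym[OF rep_cls] var_terms)
  then show ?thesis unfolding Gint_def opT_def using cls_eq by fastforce
qed

lemma L_op2:
  assumes sa: "semialgebra ar E X \<alpha>" and "set cs \<subseteq> Tset ar E X" "length cs = ar f"
  shows "\<alpha> (cls ar E X (Op f (map rep cs))) = \<alpha> (cls ar E X (Op f (map (\<lambda>c. Var (\<alpha> c)) cs)))"
proof -
  have u: "Op f (map Var cs) \<in> terms ar (Tset ar E X)" using assms by (auto simp: terms_def)
  show ?thesis using key[OF sa u] by (simp add: comp_def)
qed

lemma Gint_X:
  assumes sa: "semialgebra ar E X \<alpha>" and "length xs = ars ar s" "set xs \<subseteq> X"
  shows "Gint ar E X \<alpha> s xs \<in> X"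
proof (cases s)
  case None
  then obtain x where "xs = [x]" using assms by (cases xs) (auto simp: ars_def)
  then show ?thesis using sa assms eta_Tset[of x X ar E] None by (auto simp: Gint_def semialgebra_def)
next
  case (Some f)
  have "Op f (map rep (map (eta ar E X) xs)) \<in> terms ar X"
    using assms Some by (auto simp: terms_def ars_def intro!: rep_Tset[OF eta_Tset, unfolded terms_def, simplified]
        dest: rep_Tset[OF eta_Tset, unfolded terms_def])
  then have "cls ar E X (Op f (map rep (map (eta ar E X) xs))) \<in> Tset ar E X" by (rule cls_Tset)
  then show ?thesis using sa Some unfolding Gint_def opT_def semialgebra_def by auto
qed

lemma G:
  assumes sa: "semialgebra ar E X \<alpha>" and "wf ar t" and \<rho>: "\<And>v. \<rho> v \<in> X"
  shows "eval (Gint ar E X \<alpha>) (\<lambda>v. \<alpha> (eta ar E X (\<rho> v))) (emb t)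
        = \<alpha> (cls ar E X (subst (\<lambda>v. Var (\<rho> v)) t))"
  using assms(2)
proof (induction t)
  case (Var v) then show ?case by (simp add: eta_def)
next
  case (Op f ts)
  let ?s = "subst (\<lambda>v. Var (\<rho> v))"
  have st: "\<And>t. t \<in> set ts \<Longrightarrow> ?s t \<in> terms ar X"
    using Op.prems by (intro subst_terms) (auto simp: terms_def \<rho>)
  let ?cs = "map (\<lambda>t. cls ar E X (?s t)) ts"
  have cs: "set ?cs \<subseteq> Tset ar E X" using st by (auto intro: cls_Tset)
  have "eval (Gint ar E X \<alpha>) (\<lambda>v. \<alpha> (eta ar E X (\<rho> v))) (emb (Op f ts))
      = Gint ar E X \<alpha> (Some f) (map (\<lambda>c. \<alpha> c) ?cs)"
    using Op by (simp add: comp_def cong: map_cong)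
  also have "\<dots> = \<alpha> (cls ar E X (Op f (map (\<lambda>c. Var (\<alpha> c)) ?cs)))"
    apply (subst L_op)
    using cs sa Op.prems by (auto simp: semialgebra_def comp_def)
  also have "\<dots> = \<alpha> (cls ar E X (Op f (map rep ?cs)))"
    using L_op2[OF sa cs] Op.prems by simp
  also have "cls ar E X (Op f (map rep ?cs)) = cls ar E X (Op f (map ?s ts))"
    apply (rule cls_eq, rule eqv.cong)
    using Op.prems st by (auto intro!: eqv.sym[OF rep_cls])
  finally show ?case by simp
qed

lemma Es_cases:
  assumes "(l, r) \<in> Es ar E"
  obtains (a1) "l = A (A (Var 0))" "r = A (Var 0)"
      | (a2) f where "l = A (Op (Some f) (map Var [0..<ar f]))" "r = Op (Some f) (map Var [0..<ar f])"
      | (a3) f where "l = Op (Some f) (map (\<lambda>i. A (Var i)) [0..<ar f])" "r = Op (Some f) (map Var [0..<ar f])"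
      | (a4) l0 r0 where "(l0, r0) \<in> E" "l = subst (\<lambda>v. A (Var v)) (emb l0)" "r = subst (\<lambda>v. A (Var v)) (emb r0)"
  using assms unfolding Es_def by fast

lemma GN: "Gint ar E X \<alpha> None [x] = \<alpha> (eta ar E X x)" by (simp add: Gint_def)

lemma eq1:
  assumes sa: "semialgebra ar E X \<alpha>" and \<rho>: "\<And>v. \<rho> v \<in> X"
  shows "eval (Gint ar E X \<alpha>) \<rho> (A (A (Var 0))) = eval (Gint ar E X \<alpha>) \<rho> (A (Var 0))"
proof -
  have "eta ar E X (\<rho> 0) \<in> Tset ar E X" by (rule eta_Tset[OF \<rho>])
  from L1[OF sa this] show ?thesis by (simp add: A_def GN)
qed

lemma eq2:
  assumes sa: "semialgebra ar E X \<alpha>" and \<rho>: "\<And>v. \<rho> v \<in> X"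
  shows "eval (Gint ar E X \<alpha>) \<rho> (A (Op (Some f) (map Var [0..<ar f])))
       = eval (Gint ar E X \<alpha>) \<rho> (Op (Some f) (map Var [0..<ar f]))"
proof -
  have "\<forall>i. rep (eta ar E X (\<rho> i)) \<in> terms ar X" by (intro allI rep_Tset[of _ ar E] eta_Tset \<rho>)
  then have "Op f (map rep (map (eta ar E X) (map \<rho> [0..<ar f]))) \<in> terms ar X"
    by (auto simp: terms_def)
  then have c: "opT ar E X f (map (eta ar E X) (map \<rho> [0..<ar f])) \<in> Tset ar E X"
    unfolding opT_def by (rule cls_Tset)
  have "eval (Gint ar E X \<alpha>) \<rho> (Op (Some f) (map Var [0..<ar f]))
     = \<alpha> (opT ar E X f (map (eta ar E X) (map \<rho> [0..<ar f])))"
    by (simp add: Gint_def comp_def)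
  moreover have "eval (Gint ar E X \<alpha>) \<rho> (A (Op (Some f) (map Var [0..<ar f])))
     = \<alpha> (eta ar E X (\<alpha> (opT ar E X f (map (eta ar E X) (map \<rho> [0..<ar f])))))"
    by (simp add: A_def GN Gint_def comp_def)
  ultimately show ?thesis using L1[OF sa c] by simp
qed

lemma eq3:
  assumes sa: "semialgebra ar E X \<alpha>" and \<rho>: "\<And>v. \<rho> v \<in> X"
  shows "eval (Gint ar E X \<alpha>) \<rho> (Op (Some f) (map (\<lambda>i. A (Var i)) [0..<ar f]))
       = eval (Gint ar E X \<alpha>) \<rho> (Op (Some f) (map Var [0..<ar f]))"
proof -
  let ?I = "Gint ar E X \<alpha>"
  let ?cs = "map (\<lambda>i. eta ar E X (\<rho> i)) [0..<ar f]"
  have cs: "set ?cs \<subseteq> Tset ar E X" using eta_Tset[OF \<rho>] by auto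
  have hx: "\<And>i. \<alpha> (eta ar E X (\<rho> i)) \<in> X"
    using sa eta_Tset[OF \<rho>] unfolding semialgebra_def by blast
  have "eval ?I \<rho> (Op (Some f) (map (\<lambda>i. A (Var i)) [0..<ar f]))
      = ?I (Some f) (map (\<lambda>i. \<alpha> (eta ar E X (\<rho> i))) [0..<ar f])"
    by (simp add: A_def GN comp_def)
  also have "\<dots> = \<alpha> (cls ar E X (Op f (map Var (map (\<lambda>i. \<alpha> (eta ar E X (\<rho> i))) [0..<ar f]))))"
    by (rule L_op) (use hx in auto)
  also have "\<dots> = \<alpha> (cls ar E X (Op f (map (\<lambda>c. Var (\<alpha> c)) ?cs)))"
    by (simp add: comp_def)
  also have "\<dots> = \<alpha> (cls ar E X (Op f (map rep ?cs)))"
    using L_op2[OF sa cs] by simp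
  also have "\<dots> = eval ?I \<rho> (Op (Some f) (map Var [0..<ar f]))"
    by (simp add: Gint_def opT_def comp_def)
  finally show ?thesis .
qed

lemma eq4:
  assumes sa: "semialgebra ar E X \<alpha>" and \<rho>: "\<And>v. \<rho> v \<in> X"
    and lr: "(l0, r0) \<in> E" and w: "wf ar l0" "wf ar r0"
  shows "eval (Gint ar E X \<alpha>) \<rho> (subst (\<lambda>v. A (Var v)) (emb l0))
       = eval (Gint ar E X \<alpha>) \<rho> (subst (\<lambda>v. A (Var v)) (emb r0))"
proof -
  let ?I = "Gint ar E X \<alpha>"
  have e: "\<And>t. eval ?I \<rho> (subst (\<lambda>v. A (Var v)) (emb t))
      = eval ?I (\<lambda>v. \<alpha> (eta ar E X (\<rho> v))) (emb t)"
    by (simp add: eval_subst A_def GN)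
  have tl: "\<And>t. wf ar t \<Longrightarrow> subst (\<lambda>v. Var (\<rho> v)) t \<in> terms ar X"
    by (rule subst_terms) (auto simp: terms_def \<rho>)
  have "eqv ar E X (subst (\<lambda>v. Var (\<rho> v)) l0) (subst (\<lambda>v. Var (\<rho> v)) r0)"
    by (rule eqv.inst[OF lr tl[OF w(1)] tl[OF w(2)]])
  then have "cls ar E X (subst (\<lambda>v. Var (\<rho> v)) l0) = cls ar E X (subst (\<lambda>v. Var (\<rho> v)) r0)"
    by (rule cls_eq)
  then show ?thesis
    by (simp only: e G[OF sa w(1) \<rho>] G[OF sa w(2) \<rho>])
qed

theorem lemma10:
  fixes ar :: "'f \<Rightarrow> nat"
    and E :: "(('f, nat) trm \<times> ('f, nat) trm) set"
    and X :: "'x set"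
    and \<alpha> :: "('f, 'x) trm set \<Rightarrow> 'x"
  assumes "\<forall>(l, r)\<in>E. wf ar l \<and> wf ar r"
    and "semialgebra ar E X \<alpha>"
  shows "is_model (ars ar) (Es ar E) X (Gint ar E X \<alpha>)"
proof -
  have main: "eval (Gint ar E X \<alpha>) \<rho> l = eval (Gint ar E X \<alpha>) \<rho> r"
    if p: "(l, r) \<in> Es ar E" and \<rho>: "\<forall>v. \<rho> v \<in> X" for l r and \<rho> :: "nat \<Rightarrow> 'x"
  proof -
    have \<rho>': "\<And>v. \<rho> v \<in> X" using \<rho> by blast
    from p show ?thesis
    proof (cases rule: Es_cases)
      case a1 then show ?thesis using eq1[OF assms(2) \<rho>'] by simp
    next
      case (a2 f) then show ?thesis using eq2[OF assms(2) \<rho>'] by simp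
    next
      case (a3 f) then show ?thesis using eq3[OF assms(2) \<rho>'] by simp
    next
      case (a4 l0 r0)
      have w: "wf ar l0" "wf ar r0" using a4(1) assms(1) by auto
      show ?thesis using a4 eq4[OF assms(2) \<rho>' a4(1) w] by simp
    qed
  qed
  show ?thesis unfolding is_model_def
  proof (intro conjI)
    show "\<forall>f xs. length xs = ars ar f \<longrightarrow> set xs \<subseteq> X \<longrightarrow> Gint ar E X \<alpha> f xs \<in> X"
      using Gint_X[OF assms(2)] by blast
    show "\<forall>(l, r)\<in>Es ar E. \<forall>\<rho>. (\<forall>v. \<rho> v \<in> X) \<longrightarrow> eval (Gint ar E X \<alpha>) \<rho> l = eval (Gint ar E X \<alpha>) \<rho> r"
      by (clarify, rule main)
  qed
qed

end
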